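(* Let $\mathbb{P}(1:3:5)=\mathrm{Proj}\,\mathbb{C}[\mathfrak{A},\mathfrak{B},\mathfrak{C}]$ (weights $1,3,5$) and $\mathbb{P}(2:3:5:6)=\mathrm{Proj}\,\mathbb{C}[\alpha,\beta,\gamma,\delta]$ (weights $2,3,5,6$). A point $(\alpha:\beta:\gamma:\delta)\in\mathbb{P}(2:3:5:6)$ satisfies the modular equation $$(-\alpha^3-\beta^2+\delta)^2-4\alpha(\alpha\beta-\gamma)^2=0$$ if and only if it lies in the image of the embedding $\Psi_5:\mathbb{P}(1:3:5)\to\mathbb{P}(2:3:5:6)$ given by $$(\mathfrak{A}:\mathfrak{B}:\mathfrak{C})\mapsto\Big(\tfrac{25}{36}\mathfrak{A}^2:\ \tfrac12\big(-\tfrac{125}{108}\mathfrak{A}^3+\tfrac54\mathfrak{B}\big):\ \tfrac1{32}\mathfrak{C}:\ \tfrac{25}{64}\mathfrak{B}^2-\tfrac5{96}\mathfrak{A}\mathfrak{C}\Big).$$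
   Context: Here $\mathfrak{A},\mathfrak{B},\mathfrak{C}$ are coordinates (coming from Klein's icosahedral invariants) on the weighted projective plane $\mathbb{P}(1:3:5)$, which is the compactification (by one cusp $(1:0:0)$) of the symmetric Hilbert modular surface for $\mathbb{Q}(\sqrt5)$. The point $(\alpha:\beta:\gamma:\delta)$ parametrizes the elliptic K3 surface $y^2=x^3+(-3\alpha t^4-\gamma t^5)x+(t^5-2\beta t^6+\delta t^7)$; the given modular equation is the condition for this surface to admit an extra section making its Néron–Severi lattice $E_8(-1)\oplus E_8(-1)\oplus\begin{pmatrix}2&1\\1&-2\end{pmatrix}$. *)

theory Defs
  imports Complex_Main
begin

text \<open>Points of the weighted projective space P(2:3:5:6) over C are represented by
nonzero tuples in C^4; two tuples represent the same point iff they differ by the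
weighted scaling (a,b,c,d) ~ (l^2 a, l^3 b, l^5 c, l^6 d) with l nonzero.\<close>

definition wproj_eq_2356 ::
  "complex \<times> complex \<times> complex \<times> complex \<Rightarrow> complex \<times> complex \<times> complex \<times> complex \<Rightarrow> bool" where
  "wproj_eq_2356 p q = (case p of (a,b,c,d) \<Rightarrow> case q of (a',b',c',d') \<Rightarrow>
     (\<exists>l::complex. l \<noteq> 0 \<and> a' = l^2 * a \<and> b' = l^3 * b \<and> c' = l^5 * c \<and> d' = l^6 * d))"

definition Psi5 :: "complex \<times> complex \<times> complex \<Rightarrow> complex \<times> complex \<times> complex \<times> complex" where
  "Psi5 = (\<lambda>(A,B,C). (25/36 * A^2,
                      1/2 * (- (125/108) * A^3 + 5/4 * B),
                      1/32 * C,
                      25/64 * B^2 - 5/96 * A * C))"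

definition modular_eq :: "complex \<Rightarrow> complex \<Rightarrow> complex \<Rightarrow> complex \<Rightarrow> bool" where
  "modular_eq a b c d \<longleftrightarrow> (- (a^3) - b^2 + d)^2 - 4 * a * (a * b - c)^2 = 0"

end

theory Submission
  imports Defs
begin

lemma psi_ident:
  fixes A B C :: complex
  shows "- ((25/36 * A^2)^3) - (1/2 * (- (125/108) * A^3 + 5/4 * B))^2 + (25/64 * B^2 - 5/96 * A * C)
     = 5/3 * A * ((25/36 * A^2) * (1/2 * (- (125/108) * A^3 + 5/4 * B)) - 1/32 * C)"
  by (simp add: field_simps power2_eq_square power3_eq_cube)

theorem mainTheorem1:
  fixes a b c d :: complex
  assumes "(a, b, c, d) \<noteq> (0, 0, 0, 0)"
  shows "modular_eq a b c d \<longleftrightarrow>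
    (\<exists>A B C :: complex. (A, B, C) \<noteq> (0, 0, 0) \<and>
        wproj_eq_2356 (Psi5 (A, B, C)) (a, b, c, d))"
proof
  assume m: "modular_eq a b c d"
  define s0 where "s0 = csqrt a"
  have s0: "s0^2 = a" unfolding s0_def by simp
  have "(- (a^3) - b^2 + d)^2 = (2*s0*(a*b-c))^2"
    using m s0 unfolding modular_eq_def by (simp add: power_mult_distrib)
  then have "- (a^3) - b^2 + d = 2*s0*(a*b-c) \<or> - (a^3) - b^2 + d = - (2*s0*(a*b-c))"
    by (simp add: power2_eq_iff)
  then obtain s where s: "s^2 = a" and sd: "- (a^3) - b^2 + d = 2*s*(a*b-c)"
  proof
    assume "- (a^3) - b^2 + d = 2*s0*(a*b-c)"
    thus ?thesis using that s0 by blast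
  next
    assume h: "- (a^3) - b^2 + d = - (2*s0*(a*b-c))"
    have "(-s0)^2 = a" using s0 by simp
    moreover have "- (a^3) - b^2 + d = 2*(-s0)*(a*b-c)" using h by simp
    ultimately show ?thesis using that by blast
  qed
  define A where "A = 6/5 * s"
  define B where "B = 8/5 * (b + 125/216 * A^3)"
  define C where "C = 32 * c"
  have ea: "25/36 * A^2 = a" using s unfolding A_def by (simp add: power2_eq_square)
  have eb: "1/2 * (- (125/108) * A^3 + 5/4 * B) = b" unfolding B_def by (simp add: algebra_simps)
  have ec: "1/32 * C = c" unfolding C_def by simp
  have "- (a^3) - b^2 + (25/64 * B^2 - 5/96 * A * C) = 5/3 * A * (a*b - c)"
    using psi_ident[of A B C] unfolding ea eb ec .
  also have "\<dots> = 2*s*(a*b-c)" unfolding A_def by simp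
  finally have ed: "25/64 * B^2 - 5/96 * A * C = d" using sd by (metis add_left_cancel)
  have "(A,B,C) \<noteq> (0,0,0)"
  proof
    assume "(A,B,C) = (0,0,0)"
    hence "A = 0" "B = 0" "C = 0" by auto
    with ea eb ec ed assms show False by simp
  qed
  moreover have "wproj_eq_2356 (Psi5 (A, B, C)) (a, b, c, d)"
    unfolding wproj_eq_2356_def Psi5_def using ea eb ec ed by (auto intro!: exI[of _ 1])
  ultimately show "\<exists>A B C :: complex. (A, B, C) \<noteq> (0, 0, 0) \<and>
        wproj_eq_2356 (Psi5 (A, B, C)) (a, b, c, d)" by blast
next
  assume "\<exists>A B C :: complex. (A, B, C) \<noteq> (0, 0, 0) \<and>
        wproj_eq_2356 (Psi5 (A, B, C)) (a, b, c, d)"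
  then obtain A B C l where l: "a = l^2 * (25/36 * A^2)"
    "b = l^3 * (1/2 * (- (125/108) * A^3 + 5/4 * B))" "c = l^5 * (1/32 * C)"
    "d = l^6 * (25/64 * B^2 - 5/96 * A * C)"
    unfolding wproj_eq_2356_def Psi5_def by auto
  define a0 where "a0 = 25/36 * A^2"
  define b0 where "b0 = 1/2 * (- (125/108) * A^3 + 5/4 * B)"
  define c0 where "c0 = 1/32 * C"
  define d0 where "d0 = 25/64 * B^2 - 5/96 * A * C"
  have id: "- (a0^3) - b0^2 + d0 = 5/3 * A * (a0*b0 - c0)"
    unfolding a0_def b0_def c0_def d0_def by (rule psi_ident)
  have h4: "4*a0 = (5/3*A)^2" by (simp add: a0_def power2_eq_square)
  have "(- (a0^3) - b0^2 + d0)^2 - 4 * a0 * (a0*b0 - c0)^2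
      = (5/3*A*(a0*b0-c0))^2 - (5/3*A)^2*(a0*b0-c0)^2" by (simp only: id h4)
  also have "\<dots> = 0" by algebra
  finally have "(- (a0^3) - b0^2 + d0)^2 - 4 * a0 * (a0*b0 - c0)^2 = 0" .
  hence "l^12 * ((- (a0^3) - b0^2 + d0)^2 - 4 * a0 * (a0*b0 - c0)^2) = 0" by simp
  moreover have "l^12 * ((- (a0^3) - b0^2 + d0)^2 - 4 * a0 * (a0*b0 - c0)^2)
     = (- ((l^2*a0)^3) - (l^3*b0)^2 + l^6*d0)^2 - 4 * (l^2*a0) * ((l^2*a0)*(l^3*b0) - l^5*c0)^2"
    by algebra
  ultimately show "modular_eq a b c d"
    unfolding modular_eq_def l a0_def[symmetric] b0_def[symmetric] c0_def[symmetric] d0_def[symmetric]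
    by simp
qed

end
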